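(* Let $f:X\to Y$ be a local homeomorphism between metric spaces. Then for every non-isolated point $x\in X$, $D_x^-f=\operatorname{sur}(f,x)$.
   Context: For a continuous map $f:X\to Y$ between metric spaces and a non-isolated point $x\in X$, the lower scalar derivative is $D_x^-f=\liminf_{z\to x,\,z\neq x}\frac{d(f(z),f(x))}{d(z,x)}\in[0,\infty]$. For $x\in X$ and $t>0$, $\operatorname{Sur}(f,x)(t)=\sup\{r\ge 0: B_r(f(x))\subset f(B_t(x))\}$, where $B_r(\cdot)$ denotes the open ball, and the surjection constant is $\operatorname{sur}(f,x)=\liminf_{t\to 0^+} t^{-1}\operatorname{Sur}(f,x)(t)$. *)

theory Defs
  imports "HOL-Analysis.Analysis"
begin

definition local_homeomorphism :: "('a::metric_space \<Rightarrow> 'b::metric_space) \<Rightarrow> bool" where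
  "local_homeomorphism f \<longleftrightarrow>
     (\<forall>x. \<exists>U. open U \<and> x \<in> U \<and> open (f ` U) \<and> (\<exists>g. homeomorphism U (f ` U) f g))"

definition lower_scalar_derivative ::
    "('a::metric_space \<Rightarrow> 'b::metric_space) \<Rightarrow> 'a \<Rightarrow> ereal" where
  "lower_scalar_derivative f x =
     Liminf (at x) (\<lambda>z. ereal (dist (f z) (f x) / dist z x))"

definition Sur :: "('a::metric_space \<Rightarrow> 'b::metric_space) \<Rightarrow> 'a \<Rightarrow> real \<Rightarrow> ereal" where
  "Sur f x t = Sup (ereal ` {r. r \<ge> 0 \<and> ball (f x) r \<subseteq> f ` ball x t})"

definition sur :: "('a::metric_space \<Rightarrow> 'b::metric_space) \<Rightarrow> 'a \<Rightarrow> ereal" where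
  "sur f x = Liminf (at_right 0) (\<lambda>t. Sur f x t / ereal t)"

end

theory Submission
  imports Defs
begin

lemma Sur_nonneg: "0 \<le> Sur f x t"
  unfolding Sur_def by (rule Sup_upper2[of 0]) auto

lemma part1:
  fixes f :: "'a::metric_space \<Rightarrow> 'b::metric_space" and x :: 'a
  assumes "local_homeomorphism f"
  shows "lower_scalar_derivative f x \<le> sur f x"
  unfolding sur_def le_Liminf_iff
proof (intro allI impI)
  fix y assume yL: "y < lower_scalar_derivative f x"
  have nn: "0 \<le> Sur f x t / ereal t" if "t > 0" for t
    using ereal_le_divide_pos[of "ereal t" 0 "Sur f x t"] that Sur_nonneg[of f x t] by simp
  show "\<forall>\<^sub>F t in at_right 0. y < Sur f x t / ereal t"
  proof (cases "y < 0")
    case True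
    show ?thesis unfolding eventually_at_right_field
      proof (intro exI[of _ 1] conjI allI impI)
      fix t :: real assume "0 < t"
      then show "y < Sur f x t / ereal t" using True nn[of t] by (rule_tac order.strict_trans2) auto
    qed simp
  next
    case False
    obtain c where yc: "y < ereal c" and cL: "ereal c < lower_scalar_derivative f x"
      using ereal_dense2[OF yL] by blast
    have "0 < ereal c" using False yc by (meson not_less le_less_trans)
    then have c0: "c > 0" by simp
    have "\<forall>\<^sub>F z in at x. ereal c < ereal (dist (f z) (f x) / dist z x)"
      using le_Liminf_iff[THEN iffD1, OF order.refl] cL unfolding lower_scalar_derivative_def by blast
    then obtain d where d0: "d > 0" and dH: "\<And>z. z \<noteq> x \<Longrightarrow> dist z x < d \<Longrightarrow> c * dist z x < dist (f z) (f x)"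
      unfolding eventually_at by (auto simp: pos_less_divide_eq)
    obtain U g where U: "open U" "x \<in> U" "open (f ` U)" "homeomorphism U (f ` U) f g"
      using assms unfolding local_homeomorphism_def by blast
    have "openin (top_of_set U) (U \<inter> ball x d)"
      by (simp add: openin_open_Int)
    then have "openin (top_of_set (f ` U)) (f ` (U \<inter> ball x d))"
      using homeomorphism_imp_open_map[OF U(4)] by blast
    then have op: "open (f ` (U \<inter> ball x d))" using U(3) openin_open_trans by blast
    have "f x \<in> f ` (U \<inter> ball x d)" using U(2) d0 by auto
    then obtain \<rho> where r0: "\<rho> > 0" and rb: "ball (f x) \<rho> \<subseteq> f ` (U \<inter> ball x d)"
      using op open_contains_ball by blast
    show ?thesis unfolding eventually_at_right_field
    proof (intro exI[of _ "\<rho> / c"] conjI allI impI)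
      show "0 < \<rho> / c" using r0 c0 by simp
      fix t :: real assume t0: "0 < t" and tr: "t < \<rho> / c"
      have ct: "c * t < \<rho>" using tr c0 by (simp add: pos_less_divide_eq mult.commute)
      have sub: "ball (f x) (c * t) \<subseteq> f ` ball x t"
      proof
        fix w assume w: "w \<in> ball (f x) (c * t)"
        then have "w \<in> f ` (U \<inter> ball x d)" using rb ct by auto
        then obtain z where z: "z \<in> U" "dist x z < d" "w = f z" by auto
        have "dist z x < t"
        proof (rule ccontr)
          assume "\<not> dist z x < t"
          then have ge: "t \<le> dist z x" by simp
          then have "z \<noteq> x" using t0 by auto
          then have "c * dist z x < dist (f z) (f x)" using dH z(2) by (metis dist_commute)
          moreover have "c * t \<le> c * dist z x" using ge c0 by simp
          moreover have "dist (f x) (f z) < c * t" using w z(3) by simp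
          ultimately show False by (simp add: dist_commute)
        qed
        then show "w \<in> f ` ball x t" using z(3) by (auto simp: dist_commute)
      qed
      have "ereal (c * t) \<le> Sur f x t"
        unfolding Sur_def using sub c0 t0 by (intro Sup_upper) auto
      then have "ereal c \<le> Sur f x t / ereal t"
        using ereal_le_divide_pos[of "ereal t" "ereal c" "Sur f x t"] t0 by (simp add: mult.commute)
      then show "y < Sur f x t / ereal t" using yc by simp
    qed
  qed
qed

lemma part2:
  fixes f :: "'a::metric_space \<Rightarrow> 'b::metric_space" and x :: 'a
  assumes "local_homeomorphism f"
  shows "sur f x \<le> lower_scalar_derivative f x"
  unfolding lower_scalar_derivative_def le_Liminf_iff
proof (intro allI impI)
  fix y assume ys: "y < sur f x"
  have "\<forall>\<^sub>F t in at_right 0. y < Sur f x t / ereal t"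
    using le_Liminf_iff[THEN iffD1, OF order.refl] ys unfolding sur_def by blast
  then obtain b where b0: "b > 0" and bH: "\<And>t. 0 < t \<Longrightarrow> t < b \<Longrightarrow> y < Sur f x t / ereal t"
    unfolding eventually_at_right_field by auto
  obtain U g where U: "open U" "x \<in> U" "open (f ` U)" "homeomorphism U (f ` U) f g"
    using assms unfolding local_homeomorphism_def by blast
  have inj: "\<And>a. a \<in> U \<Longrightarrow> g (f a) = a" using U(4) unfolding homeomorphism_def by auto
  obtain e where e0: "e > 0" and eU: "ball x e \<subseteq> U" using U(1,2) open_contains_ball by blast
  show "\<forall>\<^sub>F z in at x. y < ereal (dist (f z) (f x) / dist z x)"
    unfolding eventually_at
  proof (intro exI[of _ "min e b"] conjI ballI impI)
    show "0 < min e b" using e0 b0 by simp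
    fix z assume "z \<in> UNIV" and zz: "z \<noteq> x \<and> dist z x < min e b"
    define s where "s = dist z x"
    have s0: "s > 0" using zz s_def by simp
    have zU: "z \<in> U" using zz eU by (auto simp: dist_commute)
    have "Sur f x s \<le> ereal (dist (f z) (f x))"
      unfolding Sur_def
    proof (rule Sup_least, clarify)
      fix r assume r0: "0 \<le> r" and sub: "ball (f x) r \<subseteq> f ` ball x s"
      show "ereal r \<le> ereal (dist (f z) (f x))"
      proof (rule ccontr)
        assume "\<not> ?thesis"
        then have "f z \<in> ball (f x) r" by (simp add: dist_commute)
        then obtain w where w: "w \<in> ball x s" "f z = f w" using sub by blast
        have "w \<in> U" using w(1) zz eU s_def by auto
        then have "w = z" using inj[of w] inj[of z] zU w(2) by simp
        then show False using w(1) s_def by (simp add: dist_commute)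
      qed
    qed
    then have "Sur f x s / ereal s \<le> ereal (dist (f z) (f x) / s)"
      using s0 Sur_nonneg[of f x s]
      by (intro ereal_divide_le_posI) auto
    moreover have "y < Sur f x s / ereal s" using bH s0 zz s_def by simp
    ultimately show "y < ereal (dist (f z) (f x) / dist z x)" using s_def by simp
  qed
qed

theorem mainTheorem6:
  fixes f :: "'a::metric_space \<Rightarrow> 'b::metric_space" and x :: 'a
  assumes "local_homeomorphism f"
    and "x islimpt (UNIV :: 'a set)"
  shows "lower_scalar_derivative f x = sur f x"
  using part1[OF assms(1)] part2[OF assms(1)] by (rule antisym)

end
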